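(* Let $(V,E)$ be a finite graph and $p\in[0,1]$. Define rates on $\{0,1\}^E\times\{-1,1\}^V$ as follows: if there exists $x\in V$ such that $\sigma'=\sigma^x$ and $\eta'(e)=\eta(e)$ for all $e\in E\setminus E_x$, then $c((\eta,\sigma),(\eta',\sigma'))=(1-p)^{|\{e\in E_x:\eta'(e)=0\}|}p^{|\{e\in E_x:\eta'(e)=1\}|}\mathbf 1_{(\eta',\sigma')\in\mathcal C_x}$; otherwise, for $(\eta,\sigma)\ne(\eta',\sigma')$, the rate is $0$; and $c((\eta,\sigma),(\eta,\sigma))=-\sum_{(\eta',\sigma')\ne(\eta,\sigma)}c((\eta,\sigma),(\eta',\sigma'))$. Then for any $\eta\in\{0,1\}^E$ and $\sigma,\sigma'\in\{-1,1\}^V$, the sum $\sum_{\eta'\in\{0,1\}^E}c((\eta,\sigma),(\eta',\sigma'))$ does not depend on $\eta$ and equals $$c(\sigma,\sigma')=\begin{cases}(1-p)^{|\{e\in E_x:\delta_\sigma(e)=1\}|}&\text{if }\sigma'=\sigma^x,\\ -\sum_{x\in V}(1-p)^{|\{e\in E_x:\delta_\sigma(e)=1\}|}&\text{if }\sigma'=\sigma,\\ 0&\text{otherwise.}\end{cases}$$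
   Context: Edge configurations $\eta\in\{0,1\}^E$, spin configurations $\sigma\in\{-1,1\}^V$. For $e=\langle x,y\rangle$, $\delta_\sigma(e)=\mathbf 1_{\sigma(x)=\sigma(y)}$. $E_x$ is the set of edges with endvertex $x$; $\sigma^x$ is $\sigma$ with the spin at $x$ flipped. $\mathcal C_x=\{(\eta,\sigma):\eta(e)\le\delta_\sigma(e)\text{ for all }e\in E_x\}$. *)

theory Defs
  imports "HOL-Library.FuncSet" Complex_Main
begin

definition finite_graph :: "'v set \<Rightarrow> 'v set set \<Rightarrow> bool" where
  "finite_graph V E \<longleftrightarrow> finite V \<and> (\<forall>e\<in>E. e \<subseteq> V \<and> card e = 2)"

definition edge_configs :: "'v set set \<Rightarrow> ('v set \<Rightarrow> nat) set" where
  "edge_configs E = E \<rightarrow>\<^sub>E {0, 1}"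

definition spin_configs :: "'v set \<Rightarrow> ('v \<Rightarrow> int) set" where
  "spin_configs V = V \<rightarrow>\<^sub>E {-1, 1}"

definition configs :: "'v set \<Rightarrow> 'v set set \<Rightarrow> (('v set \<Rightarrow> nat) \<times> ('v \<Rightarrow> int)) set" where
  "configs V E = edge_configs E \<times> spin_configs V"

definition delta :: "('v \<Rightarrow> int) \<Rightarrow> 'v set \<Rightarrow> nat" where
  "delta \<sigma> e = (if \<forall>u\<in>e. \<forall>w\<in>e. \<sigma> u = \<sigma> w then 1 else 0)"

definition edges_at :: "'v set set \<Rightarrow> 'v \<Rightarrow> 'v set set" where
  "edges_at E x = {e \<in> E. x \<in> e}"

definition flip :: "('v \<Rightarrow> int) \<Rightarrow> 'v \<Rightarrow> ('v \<Rightarrow> int)" where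
  "flip \<sigma> x = \<sigma>(x := - \<sigma> x)"

definition Cx :: "'v set set \<Rightarrow> 'v \<Rightarrow> (('v set \<Rightarrow> nat) \<times> ('v \<Rightarrow> int)) set" where
  "Cx E x = {(\<eta>, \<sigma>). \<forall>e\<in>edges_at E x. \<eta> e \<le> delta \<sigma> e}"

definition single_move :: "'v set \<Rightarrow> 'v set set \<Rightarrow> ('v set \<Rightarrow> nat) \<times> ('v \<Rightarrow> int)
     \<Rightarrow> ('v set \<Rightarrow> nat) \<times> ('v \<Rightarrow> int) \<Rightarrow> 'v \<Rightarrow> bool" where
  "single_move V E s s' x \<longleftrightarrow> x \<in> V \<and> snd s' = flip (snd s) x \<and>
      (\<forall>e \<in> E - edges_at E x. fst s' e = fst s e)"

definition rate_off :: "real \<Rightarrow> 'v set \<Rightarrow> 'v set set \<Rightarrow> ('v set \<Rightarrow> nat) \<times> ('v \<Rightarrow> int)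
     \<Rightarrow> ('v set \<Rightarrow> nat) \<times> ('v \<Rightarrow> int) \<Rightarrow> real" where
  "rate_off p V E s s' =
     (if \<exists>x. single_move V E s s' x then
        (let x = (THE x. single_move V E s s' x) in
          (1 - p) ^ card {e \<in> edges_at E x. fst s' e = 0} *
          p ^ card {e \<in> edges_at E x. fst s' e = 1} *
          (if s' \<in> Cx E x then 1 else 0))
      else 0)"

definition rate :: "real \<Rightarrow> 'v set \<Rightarrow> 'v set set \<Rightarrow> ('v set \<Rightarrow> nat) \<times> ('v \<Rightarrow> int)
     \<Rightarrow> ('v set \<Rightarrow> nat) \<times> ('v \<Rightarrow> int) \<Rightarrow> real" where
  "rate p V E s s' =
     (if s' = s then - (\<Sum>t \<in> configs V E - {s}. rate_off p V E s t)
      else rate_off p V E s s')"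

definition spin_rate :: "real \<Rightarrow> 'v set \<Rightarrow> 'v set set \<Rightarrow> ('v \<Rightarrow> int) \<Rightarrow> ('v \<Rightarrow> int) \<Rightarrow> real" where
  "spin_rate p V E \<sigma> \<sigma>' =
     (if \<sigma>' = \<sigma> then - (\<Sum>x\<in>V. (1 - p) ^ card {e \<in> edges_at E x. delta \<sigma> e = 1})
      else if \<exists>x\<in>V. \<sigma>' = flip \<sigma> x then
        (let x = (THE x. x \<in> V \<and> \<sigma>' = flip \<sigma> x) in
          (1 - p) ^ card {e \<in> edges_at E x. delta \<sigma> e = 1})
      else 0)"

end

theory Submission
  imports Defs
begin

lemma spin_nz: "\<sigma> \<in> spin_configs V \<Longrightarrow> x \<in> V \<Longrightarrow> \<sigma> x = 1 \<or> \<sigma> x = -1"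
  unfolding spin_configs_def by (auto simp: PiE_iff)

lemma flip_inj:
  assumes "\<sigma> \<in> spin_configs V" "x \<in> V" "y \<in> V" "flip \<sigma> y = flip \<sigma> x"
  shows "y = x"
proof (rule ccontr)
  assume "y \<noteq> x"
  then have "flip \<sigma> y x = \<sigma> x" "flip \<sigma> x x = - \<sigma> x" by (auto simp: flip_def)
  with assms(4) have "\<sigma> x = - \<sigma> x" by simp
  with spin_nz[OF assms(1,2)] show False by auto
qed

lemma flip_neq: "\<sigma> \<in> spin_configs V \<Longrightarrow> x \<in> V \<Longrightarrow> flip \<sigma> x \<noteq> \<sigma>"
  using spin_nz[of \<sigma> V x] by (auto simp: flip_def fun_eq_iff)

lemma flip_in: "\<sigma> \<in> spin_configs V \<Longrightarrow> x \<in> V \<Longrightarrow> flip \<sigma> x \<in> spin_configs V"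
  unfolding spin_configs_def flip_def by (auto simp: PiE_iff extensional_def)

lemma rate_off_zero:
  assumes "\<not> (\<exists>x\<in>V. \<sigma>' = flip \<sigma> x)"
  shows "rate_off p V E (\<eta>, \<sigma>) (\<eta>', \<sigma>') = 0"
  using assms unfolding rate_off_def single_move_def by auto

lemma prod_form:
  fixes h :: "'a \<Rightarrow> nat" and d :: "'a \<Rightarrow> nat" and p :: real
  assumes "finite S" "\<And>e. e \<in> S \<Longrightarrow> h e = 0 \<or> h e = 1"
  shows "(1 - p) ^ card {e \<in> S. h e = 0} * p ^ card {e \<in> S. h e = 1} *
     (if \<forall>e\<in>S. h e \<le> d e then 1 else 0) =
     (\<Prod>e\<in>S. if h e = 0 then 1 - p else if d e \<ge> 1 then p else 0)"
proof -
  let ?S0 = "{e \<in> S. h e = 0}" and ?S1 = "{e \<in> S. h e = 1}"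
  have S: "S = ?S0 \<union> ?S1" using assms(2) by auto
  have "(\<Prod>e\<in>S. if h e = 0 then 1 - p else if d e \<ge> 1 then p else 0)
     = (\<Prod>e\<in>?S0. if h e = 0 then 1 - p else if d e \<ge> 1 then p else 0) *
       (\<Prod>e\<in>?S1. if h e = 0 then 1 - p else if d e \<ge> 1 then p else 0)"
    by (subst S, rule prod.union_disjoint) (use assms(1) in auto)
  also have "(\<Prod>e\<in>?S0. if h e = 0 then 1 - p else if d e \<ge> 1 then p else 0) = (1-p) ^ card ?S0"
  proof -
    have "(\<Prod>e\<in>?S0. if h e = 0 then 1 - p else if d e \<ge> 1 then p else 0) = (\<Prod>e\<in>?S0. 1 - p)"
      by (rule prod.cong) auto
    then show ?thesis by simp
  qed
  also have "(\<Prod>e\<in>?S1. if h e = 0 then 1 - p else if d e \<ge> 1 then p else 0)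
      = (\<Prod>e\<in>?S1. if d e \<ge> 1 then p else 0)" by (rule prod.cong) auto
  also have "\<dots> = (if \<forall>e\<in>?S1. d e \<ge> 1 then p ^ card ?S1 else 0)"
  proof (cases "\<forall>e\<in>?S1. d e \<ge> 1")
    case True
    have "(\<Prod>e\<in>?S1. if d e \<ge> 1 then p else 0) = (\<Prod>e\<in>?S1. p)"
      using True by (intro prod.cong) auto
    then show ?thesis using True by simp
  next
    case False
    then obtain e where "e \<in> ?S1" "\<not> d e \<ge> 1" by blast
    then show ?thesis using assms(1) by (subst prod_zero) auto
  qed
  also have "(\<forall>e\<in>?S1. d e \<ge> 1) = (\<forall>e\<in>S. h e \<le> d e)" using assms(2) by force
  finally show ?thesis by simp
qed

lemma core:
  assumes G: "finite_graph V E" and eta: "\<eta> \<in> edge_configs E"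
    and sig: "\<sigma> \<in> spin_configs V" and x: "x \<in> V"
  shows "(\<Sum>\<eta>'\<in>edge_configs E. rate_off p V E (\<eta>, \<sigma>) (\<eta>', flip \<sigma> x))
        = (1 - p) ^ card {e \<in> edges_at E x. delta \<sigma> e = 1}"
proof -
  let ?Ex = "edges_at E x"
  let ?s' = "flip \<sigma> x"
  have finE: "finite E" using G unfolding finite_graph_def
    by (meson Pow_iff finite_Pow_iff finite_subset subsetI)
  have finEx: "finite ?Ex" using finE unfolding edges_at_def by simp
  define A where "A = {\<eta>' \<in> edge_configs E. \<forall>e\<in>E - ?Ex. \<eta>' e = \<eta> e}"
  define m where "m = (\<lambda>h::'a set \<Rightarrow> nat. \<lambda>e. if e \<in> ?Ex then h e else \<eta> e)"
  define g where "g = (\<lambda>e (v::nat). if v = 0 then 1 - p else if delta ?s' e \<ge> 1 then p else (0::real))"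
  have finC: "finite (edge_configs E)" unfolding edge_configs_def
    using finE by (intro finite_PiE) auto
  have step1: "(\<Sum>\<eta>'\<in>edge_configs E. rate_off p V E (\<eta>, \<sigma>) (\<eta>', ?s'))
      = (\<Sum>\<eta>'\<in>A. rate_off p V E (\<eta>, \<sigma>) (\<eta>', ?s'))"
  proof (rule sum.mono_neutral_right[OF finC])
    show "A \<subseteq> edge_configs E" unfolding A_def by auto
    show "\<forall>i\<in>edge_configs E - A. rate_off p V E (\<eta>, \<sigma>) (i, ?s') = 0"
    proof
      fix i assume i: "i \<in> edge_configs E - A"
      have "\<not> single_move V E (\<eta>, \<sigma>) (i, ?s') y" for y
      proof
        assume sm: "single_move V E (\<eta>, \<sigma>) (i, ?s') y"
        then have "y = x" using flip_inj[OF sig x] unfolding single_move_def by auto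
        with sm i show False unfolding single_move_def A_def by auto
      qed
      then show "rate_off p V E (\<eta>, \<sigma>) (i, ?s') = 0" unfolding rate_off_def by auto
    qed
  qed
  have injm: "inj_on m (?Ex \<rightarrow>\<^sub>E {0,1})"
  proof
    fix h1 h2 assume h: "h1 \<in> ?Ex \<rightarrow>\<^sub>E {0,1}" "h2 \<in> ?Ex \<rightarrow>\<^sub>E {0,1}" "m h1 = m h2"
    show "h1 = h2"
    proof
      fix e show "h1 e = h2 e"
        using h fun_cong[OF h(3), of e] unfolding m_def by (cases "e \<in> ?Ex") (auto simp: PiE_iff extensional_def)
    qed
  qed
  have imgm: "m ` (?Ex \<rightarrow>\<^sub>E {0,1}) = A"
  proof
    show "m ` (?Ex \<rightarrow>\<^sub>E {0,1}) \<subseteq> A"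
    proof
      fix y assume "y \<in> m ` (?Ex \<rightarrow>\<^sub>E {0,1})"
      then obtain h where h: "h \<in> ?Ex \<rightarrow>\<^sub>E {0,1}" "y = m h" by blast
      have "m h \<in> E \<rightarrow>\<^sub>E {0,1}"
      proof (rule PiE_I)
        fix e assume e: "e \<in> E"
        show "m h e \<in> {0,1}"
        proof (cases "e \<in> ?Ex")
          case True then show ?thesis using h(1) unfolding m_def by auto
        next
          case False then show ?thesis using eta e unfolding m_def edge_configs_def by auto
        qed
      next
        fix e assume e: "e \<notin> E"
        then have "e \<notin> ?Ex" by (simp add: edges_at_def)
        moreover have "\<eta> e = undefined"
          using eta e unfolding edge_configs_def by (meson PiE_arb)
        ultimately show "m h e = undefined" unfolding m_def by simp
      qed
      moreover have "\<forall>e\<in>E - ?Ex. m h e = \<eta> e" by (simp add: m_def)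
      ultimately show "y \<in> A" using h(2) unfolding A_def edge_configs_def by simp
    qed
    show "A \<subseteq> m ` (?Ex \<rightarrow>\<^sub>E {0,1})"
    proof
      fix \<eta>' assume a: "\<eta>' \<in> A"
      have "m (restrict \<eta>' ?Ex) = \<eta>'"
      proof
        fix e show "m (restrict \<eta>' ?Ex) e = \<eta>' e"
        proof (cases "e \<in> ?Ex")
          case True then show ?thesis by (simp add: m_def)
        next
          case F: False
          show ?thesis
          proof (cases "e \<in> E")
            case True then show ?thesis using a F unfolding A_def by (simp add: m_def)
          next
            case False
            have "\<eta>' \<in> E \<rightarrow>\<^sub>E {0,1}" using a unfolding A_def edge_configs_def by simp
            then have "\<eta>' e = undefined" using False by (meson PiE_arb)
            moreover have "\<eta> e = undefined" using eta False unfolding edge_configs_def by (meson PiE_arb)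
            ultimately show ?thesis using F by (simp add: m_def)
          qed
        qed
      qed
      moreover have "restrict \<eta>' ?Ex \<in> ?Ex \<rightarrow>\<^sub>E {0,1}"
      proof -
        have "\<eta>' \<in> E \<rightarrow>\<^sub>E {0,1}" using a unfolding A_def edge_configs_def by simp
        then show ?thesis unfolding edges_at_def by (auto simp: PiE_iff)
      qed
      ultimately show "\<eta>' \<in> m ` (?Ex \<rightarrow>\<^sub>E {0,1})" by (metis image_eqI)
    qed
  qed
  have step2: "(\<Sum>\<eta>'\<in>A. rate_off p V E (\<eta>, \<sigma>) (\<eta>', ?s'))
      = (\<Sum>h\<in>?Ex \<rightarrow>\<^sub>E {0,1}. rate_off p V E (\<eta>, \<sigma>) (m h, ?s'))"
  proof -
    have "sum (\<lambda>\<eta>'. rate_off p V E (\<eta>, \<sigma>) (\<eta>', ?s')) (m ` (?Ex \<rightarrow>\<^sub>E {0,1}))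
       = sum ((\<lambda>\<eta>'. rate_off p V E (\<eta>, \<sigma>) (\<eta>', ?s')) \<circ> m) (?Ex \<rightarrow>\<^sub>E {0,1})"
      by (rule sum.reindex[OF injm])
    then show ?thesis unfolding imgm by (simp add: comp_def)
  qed
  have step3: "rate_off p V E (\<eta>, \<sigma>) (m h, ?s') = (\<Prod>e\<in>?Ex. g e (h e))"
    if h: "h \<in> ?Ex \<rightarrow>\<^sub>E {0,1}" for h
  proof -
    have smx: "single_move V E (\<eta>, \<sigma>) (m h, ?s') x"
      unfolding single_move_def m_def using x by auto
    have the: "(THE y. single_move V E (\<eta>, \<sigma>) (m h, ?s') y) = x"
      using smx flip_inj[OF sig x] unfolding single_move_def by (intro the_equality) auto
    have c0: "{e \<in> ?Ex. fst (m h, ?s') e = 0} = {e \<in> ?Ex. h e = 0}" unfolding m_def by auto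
    have c1: "{e \<in> ?Ex. fst (m h, ?s') e = 1} = {e \<in> ?Ex. h e = 1}" unfolding m_def by auto
    have cx: "((m h, ?s') \<in> Cx E x) = (\<forall>e\<in>?Ex. h e \<le> delta ?s' e)"
      unfolding Cx_def m_def by auto
    have "rate_off p V E (\<eta>, \<sigma>) (m h, ?s') = (1 - p) ^ card {e \<in> ?Ex. h e = 0} * p ^ card {e \<in> ?Ex. h e = 1} *
     (if \<forall>e\<in>?Ex. h e \<le> delta ?s' e then 1 else 0)"
      unfolding rate_off_def using smx the c0 c1 cx by (auto simp: Let_def)
    also have "\<dots> = (\<Prod>e\<in>?Ex. g e (h e))"
      unfolding g_def using h finEx by (subst prod_form) (auto simp: PiE_iff)
    finally show ?thesis .
  qed
  have step4: "(\<Sum>h\<in>?Ex \<rightarrow>\<^sub>E {0,1}. \<Prod>e\<in>?Ex. g e (h e)) = (\<Prod>e\<in>?Ex. \<Sum>v\<in>{0,1}. g e v)"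
    by (rule prod_sum_PiE[symmetric]) (use finEx in auto)
  have step5: "(\<Sum>v\<in>{0,1}. g e v) = (if delta \<sigma> e = 1 then 1 - p else 1)" if e: "e \<in> ?Ex" for e
  proof -
    from e have eE: "e \<in> E" "x \<in> e" unfolding edges_at_def by auto
    with G have "card e = 2" "e \<subseteq> V" unfolding finite_graph_def by auto
    then obtain a b where ab: "e = {a, b}" "a \<noteq> b" by (meson card_2_iff)
    then obtain y where ey: "e = {x, y}" "y \<noteq> x" using eE(2) by auto
    with \<open>e \<subseteq> V\<close> have y: "y \<in> V" by auto
    have sx: "\<sigma> x = 1 \<or> \<sigma> x = -1" and sy: "\<sigma> y = 1 \<or> \<sigma> y = -1"
      using spin_nz[OF sig x] spin_nz[OF sig y] by auto
    have d1: "delta \<sigma> e = (if \<sigma> x = \<sigma> y then 1 else 0)"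
      unfolding delta_def ey by auto
    have d2: "delta ?s' e = (if - \<sigma> x = \<sigma> y then 1 else 0)"
      unfolding delta_def ey flip_def using ey(2) by auto
    show ?thesis unfolding g_def using d1 d2 sx sy by auto
  qed
  have "(\<Sum>\<eta>'\<in>edge_configs E. rate_off p V E (\<eta>, \<sigma>) (\<eta>', ?s'))
      = (\<Prod>e\<in>?Ex. if delta \<sigma> e = 1 then 1 - p else 1)"
  proof -
    have "(\<Sum>\<eta>'\<in>edge_configs E. rate_off p V E (\<eta>, \<sigma>) (\<eta>', ?s'))
        = (\<Sum>h\<in>?Ex \<rightarrow>\<^sub>E {0,1}. rate_off p V E (\<eta>, \<sigma>) (m h, ?s'))"
      using step1 step2 by (rule trans)
    also have "\<dots> = (\<Sum>h\<in>?Ex \<rightarrow>\<^sub>E {0,1}. \<Prod>e\<in>?Ex. g e (h e))"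
      by (rule sum.cong[OF refl]) (rule step3)
    also have "\<dots> = (\<Prod>e\<in>?Ex. \<Sum>v\<in>{0,1}. g e v)" by (rule step4)
    also have "\<dots> = (\<Prod>e\<in>?Ex. if delta \<sigma> e = 1 then 1 - p else 1)"
      by (rule prod.cong[OF refl]) (rule step5)
    finally show ?thesis .
  qed
  also have "\<dots> = (1 - p) ^ card {e \<in> ?Ex. delta \<sigma> e = 1}"
    using finEx by (simp add: prod.If_cases prod_constant Int_def)
  finally show ?thesis .
qed

theorem proposition5:
  fixes V :: "'v set" and E :: "'v set set" and p :: real
    and \<eta> :: "'v set \<Rightarrow> nat" and \<sigma> \<sigma>' :: "'v \<Rightarrow> int"
  assumes "finite_graph V E"
    and "0 \<le> p" and "p \<le> 1"
    and "\<eta> \<in> edge_configs E"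
    and "\<sigma> \<in> spin_configs V" and "\<sigma>' \<in> spin_configs V"
  shows "(\<Sum>\<eta>'\<in>edge_configs E. rate p V E (\<eta>, \<sigma>) (\<eta>', \<sigma>')) = spin_rate p V E \<sigma> \<sigma>'"
proof -
  note G = assms(1) and eta = assms(4) and sig = assms(5)
  have finV: "finite V" using G unfolding finite_graph_def by simp
  have finE: "finite E" using G unfolding finite_graph_def
    by (meson Pow_iff finite_Pow_iff finite_subset subsetI)
  have finC: "finite (edge_configs E)" unfolding edge_configs_def
    using finE by (intro finite_PiE) auto
  have finS: "finite (spin_configs V)" unfolding spin_configs_def
    using finV by (intro finite_PiE) auto
  show ?thesis
  proof (cases "\<sigma>' = \<sigma>")
    case True
    have off: "rate p V E (\<eta>, \<sigma>) (\<eta>', \<sigma>) = 0" if "\<eta>' \<noteq> \<eta>" for \<eta>'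
      using that unfolding rate_def
      by (simp, intro rate_off_zero) (metis flip_neq[OF sig])
    have "(\<Sum>\<eta>'\<in>edge_configs E. rate p V E (\<eta>, \<sigma>) (\<eta>', \<sigma>)) = rate p V E (\<eta>, \<sigma>) (\<eta>, \<sigma>)"
      using off eta finC by (subst sum.remove[of _ \<eta>]) auto
    also have "\<dots> = - (\<Sum>t \<in> configs V E. rate_off p V E (\<eta>, \<sigma>) t)"
    proof -
      have "rate_off p V E (\<eta>, \<sigma>) (\<eta>, \<sigma>) = 0"
        using flip_neq[OF sig] by (intro rate_off_zero) metis
      moreover have "finite (configs V E)" unfolding configs_def using finC finS by simp
      ultimately show ?thesis unfolding rate_def by (simp add: sum_diff1)
    qed
    also have "(\<Sum>t \<in> configs V E. rate_off p V E (\<eta>, \<sigma>) t)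
        = (\<Sum>s'\<in>spin_configs V. \<Sum>\<eta>'\<in>edge_configs E. rate_off p V E (\<eta>, \<sigma>) (\<eta>', s'))"
    proof -
      have "(\<Sum>t \<in> configs V E. rate_off p V E (\<eta>, \<sigma>) t)
          = (\<Sum>\<eta>'\<in>edge_configs E. \<Sum>s'\<in>spin_configs V. rate_off p V E (\<eta>, \<sigma>) (\<eta>', s'))"
        unfolding configs_def by (simp add: sum.cartesian_product)
      then show ?thesis by (simp add: sum.swap[of _ "edge_configs E"])
    qed
    also have "\<dots> = (\<Sum>s'\<in>flip \<sigma> ` V. \<Sum>\<eta>'\<in>edge_configs E. rate_off p V E (\<eta>, \<sigma>) (\<eta>', s'))"
      using finS flip_in[OF sig] by (intro sum.mono_neutral_right) (auto intro!: sum.neutral rate_off_zero)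
    also have "\<dots> = (\<Sum>x\<in>V. \<Sum>\<eta>'\<in>edge_configs E. rate_off p V E (\<eta>, \<sigma>) (\<eta>', flip \<sigma> x))"
      by (subst sum.reindex) (auto simp: inj_on_def intro: flip_inj[OF sig])
    also have "\<dots> = (\<Sum>x\<in>V. (1 - p) ^ card {e \<in> edges_at E x. delta \<sigma> e = 1})"
      using core[OF G eta sig] by simp
    finally show ?thesis using True unfolding spin_rate_def by simp
  next
    case False
    then have r: "rate p V E (\<eta>, \<sigma>) (\<eta>', \<sigma>') = rate_off p V E (\<eta>, \<sigma>) (\<eta>', \<sigma>')" for \<eta>'
      unfolding rate_def by auto
    show ?thesis
    proof (cases "\<exists>x\<in>V. \<sigma>' = flip \<sigma> x")
      case True
      then obtain x where x: "x \<in> V" "\<sigma>' = flip \<sigma> x" by blast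
      have the: "(THE y. y \<in> V \<and> \<sigma>' = flip \<sigma> y) = x"
        using x flip_inj[OF sig x(1)] by (intro the_equality) auto
      show ?thesis unfolding r using core[OF G eta sig x(1)] x False the
        unfolding spin_rate_def by (auto simp: Let_def)
    next
      case nf: False
      show ?thesis unfolding r using nf False unfolding spin_rate_def
        by (auto intro!: sum.neutral rate_off_zero)
    qed
  qed
qed

end
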